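(* Let $1\le t\le n$. Let $M_t$ be the real matrix with rows and columns indexed by the nonempty subsets of $[n]$ of size at most $t$, ordered by nondecreasing size, with entries $M_t[a,b]=2^{|a\cap b|}$; for $1\le r<t$, $M_r$ is the upper-left principal submatrix of $M_t$ indexed by the sets of size at most $r$. For $t\ge2$, the Schur complement $M_t/M_{t-1}$ of $M_{t-1}$ in $M_t$ is well defined (i.e. $M_{t-1}$ is invertible) and $$M_t/M_{t-1}=I+\frac{\mathbf 1_t\mathbf 1_t^T}{\alpha_{t-1}},$$ where $\mathbf 1_t$ is the all-ones vector of length $\binom nt$ and $\alpha_k=\sum_{j=0}^k\binom nj$. For $t=1$, with the convention $M_1/M_0:=M_1$, the same formula holds, i.e. $M_1=I+\mathbf 1_1\mathbf 1_1^T$.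
   Context: For a block matrix $\begin{pmatrix}A&B\\ C&D'\end{pmatrix}$ with $A$ invertible, the Schur complement of $A$ is $D'-CA^{-1}B$. Here $M_t/M_{t-1}$ is indexed by the subsets of $[n]$ of size exactly $t$. *)

theory Defs
  imports Complex_Main
begin

text \<open>Matrices are represented as real-valued functions of two indices,
  restricted to an explicit finite index set.  Indices are subsets of [n] = {1..n}.\<close>

definition subsets_upto :: "nat \<Rightarrow> nat \<Rightarrow> nat set set" where
  "subsets_upto n r = {a. a \<subseteq> {1..n} \<and> a \<noteq> {} \<and> card a \<le> r}"

definition subsets_eq :: "nat \<Rightarrow> nat \<Rightarrow> nat set set" where
  "subsets_eq n r = {a. a \<subseteq> {1..n} \<and> card a = r}"

definition Mentry :: "nat set \<Rightarrow> nat set \<Rightarrow> real" where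
  "Mentry a b = 2 ^ card (a \<inter> b)"

definition is_inverse_on :: "'i set \<Rightarrow> ('i \<Rightarrow> 'i \<Rightarrow> real) \<Rightarrow> ('i \<Rightarrow> 'i \<Rightarrow> real) \<Rightarrow> bool" where
  "is_inverse_on I A B \<longleftrightarrow>
     (\<forall>a\<in>I. \<forall>b\<in>I. (\<Sum>c\<in>I. A a c * B c b) = (if a = b then 1 else 0)) \<and>
     (\<forall>a\<in>I. \<forall>b\<in>I. (\<Sum>c\<in>I. B a c * A c b) = (if a = b then 1 else 0))"

definition invertible_on :: "'i set \<Rightarrow> ('i \<Rightarrow> 'i \<Rightarrow> real) \<Rightarrow> bool" where
  "invertible_on I A \<longleftrightarrow> (\<exists>B. is_inverse_on I A B)"

definition inverse_on :: "'i set \<Rightarrow> ('i \<Rightarrow> 'i \<Rightarrow> real) \<Rightarrow> ('i \<Rightarrow> 'i \<Rightarrow> real)" where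
  "inverse_on I A = (SOME B. is_inverse_on I A B)"

text \<open>Schur complement of the principal block indexed by I in a matrix A
  (evaluated at indices a, b of the complementary block): D - C A_I^{-1} B.
  For I = {} this is just A itself (convention M_1/M_0 = M_1).\<close>
definition schur_on :: "'i set \<Rightarrow> ('i \<Rightarrow> 'i \<Rightarrow> real) \<Rightarrow> 'i \<Rightarrow> 'i \<Rightarrow> real" where
  "schur_on I A a b = A a b - (\<Sum>c\<in>I. \<Sum>d\<in>I. A a c * inverse_on I A c d * A d b)"

definition alpha :: "nat \<Rightarrow> nat \<Rightarrow> real" where
  "alpha n k = (\<Sum>j\<le>k. real (n choose j))"

end

theory Submission
  imports Defs
begin

lemma alt_pow:
  assumes "finite A"
  shows "(\<Sum>x\<in>Pow A. (-1::real) ^ card x) = (if A = {} then 1 else 0)"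
  using assms
proof (induction A rule: finite_induct)
  case empty
  then show ?case by simp
next
  case (insert a A)
  have disj: "Pow A \<inter> insert a ` Pow A = {}" using insert by auto
  have inj: "inj_on (insert a) (Pow A)" using insert by (auto simp: inj_on_def)
  have "(\<Sum>x\<in>insert a ` Pow A. (-1::real) ^ card x) = (\<Sum>x\<in>Pow A. (-1::real) ^ card (insert a x))"
    using sum.reindex[OF inj] by simp
  also have "\<dots> = (\<Sum>x\<in>Pow A. - ((-1::real) ^ card x))"
  proof (rule sum.cong[OF refl])
    fix x assume "x \<in> Pow A"
    then have "card (insert a x) = Suc (card x)" using insert
      by (meson PowD card_insert_disjoint finite_subset subsetD)
    then show "(-1::real) ^ card (insert a x) = - ((-1) ^ card x)" by simp
  qed
  finally have "(\<Sum>x\<in>Pow (insert a A). (-1::real) ^ card x) = 0"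
    using insert by (simp add: Pow_insert sum.union_disjoint[OF _ _ disj] sum_negf)
  then show ?case by simp
qed

lemma alt_pow_ne:
  assumes "finite A" "A \<noteq> {}"
  shows "(\<Sum>x\<in>Pow A - {{}}. (-1::real) ^ card x) = -1"
proof -
  have "(\<Sum>x\<in>Pow A. (-1::real) ^ card x) = (\<Sum>x\<in>Pow A - {{}}. (-1::real) ^ card x) + 1"
    using assms by (simp add: sum.remove[of "Pow A" "{}"] )
  then show ?thesis using alt_pow[OF assms(1)] assms by simp
qed

lemma alt_interval:
  assumes "lo \<subseteq> hi" "finite hi"
  shows "(\<Sum>m\<in>{m. lo \<subseteq> m \<and> m \<subseteq> hi}. (-1::real) ^ card m) = (if lo = hi then (-1) ^ card lo else 0)"
proof -
  have eq: "{m. lo \<subseteq> m \<and> m \<subseteq> hi} = (\<lambda>x. lo \<union> x) ` Pow (hi - lo)" 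
    using assms by (auto simp: image_def)
  have inj: "inj_on (\<lambda>x. lo \<union> x) (Pow (hi - lo))" by (auto simp: inj_on_def)
  have fl: "finite lo" using assms finite_subset by blast
  have "(\<Sum>m\<in>{m. lo \<subseteq> m \<and> m \<subseteq> hi}. (-1::real) ^ card m) = (\<Sum>x\<in>Pow (hi - lo). (-1::real) ^ card (lo \<union> x))"
    unfolding eq using sum.reindex[OF inj] by simp
  also have "\<dots> = (\<Sum>x\<in>Pow (hi - lo). (-1::real) ^ card lo * (-1) ^ card x)"
  proof (rule sum.cong[OF refl])
    fix x assume x: "x \<in> Pow (hi - lo)"
    then have "finite x" using assms by (meson PowD finite_Diff finite_subset)
    then have "card (lo \<union> x) = card lo + card x" using x fl by (subst card_Un_disjoint) auto
    then show "(-1::real) ^ card (lo \<union> x) = (-1) ^ card lo * (-1) ^ card x" by (simp add: power_add)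
  qed
  also have "\<dots> = (-1) ^ card lo * (if hi - lo = {} then 1 else 0)"
    by (simp add: sum_distrib_left[symmetric] alt_pow assms)
  finally show ?thesis using assms by auto
qed

lemma neg1_diff: "b \<le> a \<Longrightarrow> (-1::real) ^ (a - b) = (-1) ^ a * (-1) ^ b"
proof -
  assume "b \<le> a" then obtain k where "a = b + k" using le_Suc_ex by blast
  then show ?thesis by (simp add: power_add)
qed

definition Wm :: "nat set \<Rightarrow> nat set \<Rightarrow> real" where
  "Wm c p = (if p \<subseteq> c then 1 else 0)"
definition Wi :: "nat set \<Rightarrow> nat set \<Rightarrow> real" where
  "Wi q c = (if c \<subseteq> q then (-1) ^ (card q - card c) else 0)"
definition gg :: "nat set \<Rightarrow> real" where
  "gg p = - ((-1) ^ card p)"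

locale LL = fixes n r :: nat
begin

abbreviation "F \<equiv> subsets_upto n r"

lemma finF: "finite F"
proof -
  have "F \<subseteq> Pow {1..n}" by (auto simp: subsets_upto_def)
  then show ?thesis by (rule finite_subset) simp
qed

lemma memF: "c \<in> F \<longleftrightarrow> c \<subseteq> {1..n} \<and> c \<noteq> {} \<and> card c \<le> r"
  by (simp add: subsets_upto_def)

lemma finmem: "c \<in> F \<Longrightarrow> finite c"
  using memF finite_subset by blast

lemma mid:
  assumes "lo \<in> F" "hi \<in> F"
  shows "(\<Sum>m\<in>F. if lo \<subseteq> m \<and> m \<subseteq> hi then (-1::real) ^ card m else 0) = (if lo = hi then (-1) ^ card lo else 0)"
proof -
  have s1: "(\<Sum>m\<in>F. if lo \<subseteq> m \<and> m \<subseteq> hi then (-1::real) ^ card m else 0)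
     = (\<Sum>m\<in>{m\<in>F. lo \<subseteq> m \<and> m \<subseteq> hi}. (-1::real) ^ card m)"
    using finF by (simp add: sum.inter_filter)
  show ?thesis
  proof (cases "lo \<subseteq> hi")
    case True
    have "{m\<in>F. lo \<subseteq> m \<and> m \<subseteq> hi} = {m. lo \<subseteq> m \<and> m \<subseteq> hi}"
    proof (auto)
      fix m assume "lo \<subseteq> m" "m \<subseteq> hi"
      then show "m \<in> F" using assms memF finmem[OF assms(2)]
        by (metis card_mono order_trans subset_empty)
    qed
    then show ?thesis using s1 alt_interval[OF True finmem[OF assms(2)]] by simp
  next
    case False
    then have E: "{m\<in>F. lo \<subseteq> m \<and> m \<subseteq> hi} = {}" by auto
    have "lo \<noteq> hi" using False by auto
    then show ?thesis unfolding s1 E by simp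
  qed
qed

lemma WiW: "q \<in> F \<Longrightarrow> p \<in> F \<Longrightarrow> (\<Sum>c\<in>F. Wi q c * Wm c p) = (if q = p then 1 else 0)"
proof -
  assume q: "q \<in> F" and p: "p \<in> F"
  have "(\<Sum>c\<in>F. Wi q c * Wm c p) = (\<Sum>c\<in>F. (-1) ^ card q * (if p \<subseteq> c \<and> c \<subseteq> q then (-1::real) ^ card c else 0))"
  proof (rule sum.cong[OF refl])
    fix c assume "c \<in> F"
    show "Wi q c * Wm c p = (-1) ^ card q * (if p \<subseteq> c \<and> c \<subseteq> q then (-1::real) ^ card c else 0)"
      using card_mono[OF finmem[OF q]]
      by (auto simp: Wi_def Wm_def neg1_diff)
  qed
  also have "\<dots> = (-1) ^ card q * (if p = q then (-1) ^ card p else 0)"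
    by (simp add: sum_distrib_left[symmetric] mid[OF p q])
  finally show ?thesis by (auto simp: power_add[symmetric])
qed

lemma WWi: "e \<in> F \<Longrightarrow> c \<in> F \<Longrightarrow> (\<Sum>q\<in>F. Wm e q * Wi q c) = (if e = c then 1 else 0)"
proof -
  assume e: "e \<in> F" and c: "c \<in> F"
  have "(\<Sum>q\<in>F. Wm e q * Wi q c) = (\<Sum>q\<in>F. (-1) ^ card c * (if c \<subseteq> q \<and> q \<subseteq> e then (-1::real) ^ card q else 0))"
  proof (rule sum.cong[OF refl])
    fix q assume q: "q \<in> F"
    show "Wm e q * Wi q c = (-1) ^ card c * (if c \<subseteq> q \<and> q \<subseteq> e then (-1::real) ^ card q else 0)"
      using card_mono[OF finmem[OF q]]
      by (auto simp: Wi_def Wm_def neg1_diff mult.commute)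
  qed
  also have "\<dots> = (-1) ^ card c * (if c = e then (-1) ^ card c else 0)"
    by (simp add: sum_distrib_left[symmetric] mid[OF c e])
  finally show ?thesis by (auto simp: power_add[symmetric])
qed

lemma filt_sub: "c \<in> F \<Longrightarrow> {p\<in>F. p \<subseteq> c} = Pow c - {{}}"
proof -
  assume c: "c \<in> F"
  show ?thesis
  proof
    show "{p\<in>F. p \<subseteq> c} \<subseteq> Pow c - {{}}" using memF by auto
    show "Pow c - {{}} \<subseteq> {p\<in>F. p \<subseteq> c}"
    proof
      fix p assume p: "p \<in> Pow c - {{}}"
      have "card p \<le> card c" using p card_mono[OF finmem[OF c]] by auto
      then show "p \<in> {p\<in>F. p \<subseteq> c}" using p c memF by auto
    qed
  qed
qed

lemma sumWi: "q \<in> F \<Longrightarrow> (\<Sum>c\<in>F. Wi q c) = gg q"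
proof -
  assume q: "q \<in> F"
  have "(\<Sum>c\<in>F. Wi q c) = (\<Sum>c\<in>{p\<in>F. p \<subseteq> q}. (-1) ^ card q * (-1::real) ^ card c)"
    using finF card_mono[OF finmem[OF q]]
    by (simp add: Wi_def sum.inter_filter[symmetric] neg1_diff cong: if_cong)
  also have "\<dots> = (-1) ^ card q * (\<Sum>c\<in>Pow q - {{}}. (-1::real) ^ card c)"
    by (simp add: filt_sub[OF q] sum_distrib_left)
  also have "\<dots> = gg q" using alt_pow_ne[OF finmem[OF q]] q memF by (simp add: gg_def)
  finally show ?thesis .
qed

lemma sumgW: "e \<in> F \<Longrightarrow> (\<Sum>p\<in>F. gg p * Wm e p) = 1"
proof -
  assume e: "e \<in> F"
  have "(\<Sum>p\<in>F. gg p * Wm e p) = (\<Sum>p\<in>F. if p \<subseteq> e then - ((-1::real) ^ card p) else 0)"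
    by (rule sum.cong) (auto simp: Wm_def gg_def)
  also have "\<dots> = (\<Sum>p\<in>{p\<in>F. p \<subseteq> e}. - ((-1::real) ^ card p))"
    using finF by (simp add: sum.inter_filter)
  also have "\<dots> = - (\<Sum>c\<in>Pow e - {{}}. (-1::real) ^ card c)"
    by (simp add: filt_sub[OF e] sum_negf)
  also have "\<dots> = 1" using alt_pow_ne[OF finmem[OF e]] e memF by simp
  finally show ?thesis .
qed

end

context LL begin

lemma sub_count_set:
  assumes "B \<subseteq> {1..n}" "card B \<le> r"
  shows "{p\<in>F. p \<subseteq> B} = Pow B - {{}}"
proof
  show "{p\<in>F. p \<subseteq> B} \<subseteq> Pow B - {{}}" using memF by auto
  show "Pow B - {{}} \<subseteq> {p\<in>F. p \<subseteq> B}"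
  proof
    fix p assume p: "p \<in> Pow B - {{}}"
    have fB: "finite B" using assms(1) finite_subset by blast
    have "card p \<le> card B" using p card_mono[OF fB] by auto
    then show "p \<in> {p\<in>F. p \<subseteq> B}" using p assms memF by auto
  qed
qed

lemma sumW_ind: "(\<Sum>p\<in>F. Wm B p) = real (card {p\<in>F. p \<subseteq> B})"
proof -
  have "(\<Sum>p\<in>F. Wm B p) = (\<Sum>p\<in>F. if p \<subseteq> B then 1 else 0)" by (simp add: Wm_def)
  also have "\<dots> = real (card {p\<in>F. p \<subseteq> B})" using finF by (subst sum.inter_filter[symmetric]) auto
  finally show ?thesis .
qed

lemma countsub:
  assumes "B \<subseteq> {1..n}" "card B \<le> r"
  shows "(\<Sum>p\<in>F. Wm B p) = 2 ^ card B - 1"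
proof -
  have fB: "finite B" using assms(1) finite_subset by blast
  have "card (Pow B - {{}}) = 2 ^ card B - 1" using fB by (simp add: card_Pow)
  moreover have "(1::nat) \<le> 2 ^ card B" by simp
  ultimately show ?thesis unfolding sumW_ind sub_count_set[OF assms] by (simp add: of_nat_diff)
qed

lemma WmInt: "Wm c p * Wm A p = Wm (c \<inter> A) p" by (auto simp: Wm_def)

definition mv :: "(nat set \<Rightarrow> real) \<Rightarrow> nat set \<Rightarrow> real" where
  "mv y c = 1 + (\<Sum>p\<in>F. Wm c p * y p)"

lemma Mentry_mv:
  assumes "A \<subseteq> {1..n}" "c \<in> F"
  shows "Mentry A c = mv (Wm A) c" "Mentry c A = mv (Wm A) c"
proof -
  have "c \<inter> A \<subseteq> {1..n}" using assms by auto
  moreover have "card (c \<inter> A) \<le> r" using assms memF card_mono[OF finmem[OF assms(2)]]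
    by (meson inf_le1 order_trans)
  ultimately have "(\<Sum>p\<in>F. Wm c p * Wm A p) = 2 ^ card (c \<inter> A) - 1"
    unfolding WmInt by (rule countsub)
  then show "Mentry c A = mv (Wm A) c" by (simp add: mv_def Mentry_def)
  then show "Mentry A c = mv (Wm A) c" by (simp add: Mentry_def Int_commute)
qed

lemma Lsum: "q \<in> F \<Longrightarrow> (\<Sum>c\<in>F. Wi q c * mv y c) = gg q + y q"
proof -
  assume q: "q \<in> F"
  have "(\<Sum>c\<in>F. Wi q c * mv y c) = (\<Sum>c\<in>F. Wi q c) + (\<Sum>c\<in>F. \<Sum>p\<in>F. Wi q c * Wm c p * y p)"
    by (simp add: mv_def distrib_left sum.distrib sum_distrib_left mult.assoc)
  also have "(\<Sum>c\<in>F. \<Sum>p\<in>F. Wi q c * Wm c p * y p) = (\<Sum>p\<in>F. (\<Sum>c\<in>F. Wi q c * Wm c p) * y p)"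
    by (subst sum.swap) (simp add: sum_distrib_right)
  also have "\<dots> = (\<Sum>p\<in>F. if q = p then y p else 0)" using WiW q by (intro sum.cong) auto
  also have "\<dots> = y q" using q finF by simp
  finally show ?thesis using sumWi[OF q] by simp
qed

definition hh :: "nat set \<Rightarrow> real" where
  "hh c = (\<Sum>q\<in>F. Wi q c * gg q)"

definition al :: real where "al = real (card F) + 1"

definition Minv :: "nat set \<Rightarrow> nat set \<Rightarrow> real" where
  "Minv c d = (\<Sum>q\<in>F. Wi q c * Wi q d) - hh c * hh d / al"

lemma gg_sq: "gg q * gg q = 1" by (simp add: gg_def flip: power_add)

lemma hsum: "(\<Sum>c\<in>F. hh c * mv y c) = real (card F) + (\<Sum>q\<in>F. gg q * y q)"
proof -
  have "(\<Sum>c\<in>F. hh c * mv y c) = (\<Sum>c\<in>F. \<Sum>q\<in>F. gg q * (Wi q c * mv y c))"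
    by (simp add: hh_def sum_distrib_right sum_distrib_left mult_ac)
  also have "\<dots> = (\<Sum>q\<in>F. gg q * (\<Sum>c\<in>F. Wi q c * mv y c))"
    by (subst sum.swap) (simp add: sum_distrib_left)
  also have "\<dots> = (\<Sum>q\<in>F. 1 + gg q * y q)"
    by (intro sum.cong) (auto simp: Lsum distrib_left gg_sq mult.assoc[symmetric])
  finally show ?thesis by (simp add: sum.distrib)
qed

lemma Usum: "(\<Sum>d\<in>F. Minv c d * mv y d) = (\<Sum>q\<in>F. Wi q c * (gg q + y q)) - hh c * (real (card F) + (\<Sum>q\<in>F. gg q * y q)) / al"
proof -
  have "(\<Sum>d\<in>F. Minv c d * mv y d) = (\<Sum>d\<in>F. \<Sum>q\<in>F. Wi q c * (Wi q d * mv y d)) - hh c / al * (\<Sum>d\<in>F. hh d * mv y d)"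
  proof -
    have "\<And>d. Minv c d * mv y d = (\<Sum>q\<in>F. Wi q c * (Wi q d * mv y d)) - hh c / al * (hh d * mv y d)"
      by (simp add: Minv_def algebra_simps sum_distrib_right sum_distrib_left)
    then show ?thesis by (simp add: sum_subtractf sum_distrib_left)
  qed
  also have "(\<Sum>d\<in>F. \<Sum>q\<in>F. Wi q c * (Wi q d * mv y d)) = (\<Sum>q\<in>F. Wi q c * (\<Sum>d\<in>F. Wi q d * mv y d))"
    by (subst sum.swap) (simp add: sum_distrib_left)
  also have "\<dots> = (\<Sum>q\<in>F. Wi q c * (gg q + y q))"
    by (intro sum.cong) (auto simp: Lsum)
  finally show ?thesis by (simp add: hsum)
qed

lemma Vsum: "(\<Sum>c\<in>F. mv y c * ((\<Sum>q\<in>F. Wi q c * v q) - hh c * K)) = (\<Sum>q\<in>F. (gg q + y q) * v q) - K * (real (card F) + (\<Sum>q\<in>F. gg q * y q))"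
proof -
  have "(\<Sum>c\<in>F. mv y c * ((\<Sum>q\<in>F. Wi q c * v q) - hh c * K)) = (\<Sum>c\<in>F. \<Sum>q\<in>F. v q * (Wi q c * mv y c)) - K * (\<Sum>c\<in>F. hh c * mv y c)"
  proof -
    have "\<And>c. mv y c * ((\<Sum>q\<in>F. Wi q c * v q) - hh c * K) = (\<Sum>q\<in>F. v q * (Wi q c * mv y c)) - K * (hh c * mv y c)"
      by (simp add: algebra_simps sum_distrib_left)
    then show ?thesis by (simp add: sum_subtractf sum_distrib_left)
  qed
  also have "(\<Sum>c\<in>F. \<Sum>q\<in>F. v q * (Wi q c * mv y c)) = (\<Sum>q\<in>F. v q * (\<Sum>c\<in>F. Wi q c * mv y c))"
    by (subst sum.swap) (simp add: sum_distrib_left)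
  also have "\<dots> = (\<Sum>q\<in>F. (gg q + y q) * v q)"
    by (intro sum.cong) (auto simp: Lsum)
  finally show ?thesis by (simp add: hsum)
qed

lemma MinvM: "c \<in> F \<Longrightarrow> e \<in> F \<Longrightarrow> (\<Sum>d\<in>F. Minv c d * Mentry d e) = (if c = e then 1 else 0)"
proof -
  assume c: "c \<in> F" and e: "e \<in> F"
  have eA: "e \<subseteq> {1..n}" using e memF by auto
  have "(\<Sum>d\<in>F. Minv c d * Mentry d e) = (\<Sum>d\<in>F. Minv c d * mv (Wm e) d)"
    by (intro sum.cong) (auto simp: Mentry_mv(2)[OF eA])
  also have "\<dots> = (\<Sum>q\<in>F. Wi q c * gg q) + (\<Sum>q\<in>F. Wm e q * Wi q c) - hh c * (real (card F) + 1) / al"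
    by (simp add: Usum sumgW[OF e] distrib_left sum.distrib mult.commute)
  also have "\<dots> = (if c = e then 1 else 0)"
    using WWi[OF e c] by (simp add: hh_def al_def)
  finally show ?thesis .
qed

lemma Minv_sym: "Minv c d = Minv d c" by (simp add: Minv_def mult.commute)

lemma MMinv: "c \<in> F \<Longrightarrow> e \<in> F \<Longrightarrow> (\<Sum>d\<in>F. Mentry c d * Minv d e) = (if c = e then 1 else 0)"
proof -
  assume c: "c \<in> F" and e: "e \<in> F"
  have "(\<Sum>d\<in>F. Mentry c d * Minv d e) = (\<Sum>d\<in>F. Minv e d * Mentry d c)"
    by (intro sum.cong) (auto simp: Minv_sym Mentry_def Int_commute)
  then show ?thesis using MinvM[OF e c] by auto
qed

lemma inv: "is_inverse_on F Mentry Minv"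
  unfolding is_inverse_on_def using MinvM MMinv by auto

lemma uniq:
  assumes "is_inverse_on F Mentry B" "c \<in> F" "d \<in> F"
  shows "B c d = Minv c d"
proof -
  have "B c d = (\<Sum>e\<in>F. if e = d then B c e else 0)" using assms finF by simp
  also have "\<dots> = (\<Sum>e\<in>F. B c e * (\<Sum>k\<in>F. Mentry e k * Minv k d))"
    using MMinv assms by (intro sum.cong) auto
  also have "\<dots> = (\<Sum>k\<in>F. (\<Sum>e\<in>F. B c e * Mentry e k) * Minv k d)"
    by (simp add: sum_distrib_left sum_distrib_right mult_ac) (rule sum.swap)
  also have "\<dots> = (\<Sum>k\<in>F. if c = k then Minv k d else 0)"
    using assms unfolding is_inverse_on_def by (intro sum.cong) auto
  also have "\<dots> = Minv c d" using assms finF by simp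
  finally show ?thesis .
qed

lemma inverse_eq: "c \<in> F \<Longrightarrow> d \<in> F \<Longrightarrow> inverse_on F Mentry c d = Minv c d"
proof -
  assume "c \<in> F" "d \<in> F"
  have "is_inverse_on F Mentry (inverse_on F Mentry)"
    unfolding inverse_on_def by (rule someI[of "is_inverse_on F Mentry", OF inv])
  then show ?thesis using uniq \<open>c \<in> F\<close> \<open>d \<in> F\<close> by blast
qed

end

context LL begin

lemma cardF_alpha: "al = alpha n r"
proof -
  have e1: "insert {} F = (\<Union>j\<in>{..r}. {a. a \<subseteq> {1..n} \<and> card a = j})"
    by (auto simp: subsets_upto_def)
  have "card (\<Union>j\<in>{..r}. {a. a \<subseteq> {1..n} \<and> card a = j}) = (\<Sum>j\<le>r. card {a. a \<subseteq> {1..n} \<and> card a = j})"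
    by (rule card_UN_disjoint) (auto intro: finite_subset[of _ "Pow {1..n}"])
  also have "\<dots> = (\<Sum>j\<le>r. n choose j)" by (simp add: n_subsets)
  finally have "card (insert {} F) = (\<Sum>j\<le>r. n choose j)" using e1 by simp
  moreover have "{} \<notin> F" by (simp add: subsets_upto_def)
  ultimately have "card F + 1 = (\<Sum>j\<le>r. n choose j)" using finF by simp
  then have "real (card F) + 1 = real (\<Sum>j\<le>r. n choose j)" by (metis of_nat_Suc Suc_eq_plus1 add.commute)
  then show ?thesis by (simp add: al_def alpha_def)
qed

lemma filt_a:
  assumes "a \<in> subsets_eq n (Suc r)"
  shows "{p\<in>F. p \<subseteq> a} = Pow a - {{}, a}"
proof
  show "{p\<in>F. p \<subseteq> a} \<subseteq> Pow a - {{}, a}" using assms memF by (auto simp: subsets_eq_def)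
  show "Pow a - {{}, a} \<subseteq> {p\<in>F. p \<subseteq> a}"
  proof
    fix p assume p: "p \<in> Pow a - {{}, a}"
    have fa: "finite a" using assms by (auto simp: subsets_eq_def intro: finite_subset)
    have "card p < card a" using p psubset_card_mono[OF fa] by auto
    then show "p \<in> {p\<in>F. p \<subseteq> a}" using p assms memF by (auto simp: subsets_eq_def)
  qed
qed

lemma Gval:
  assumes "a \<in> subsets_eq n (Suc r)"
  shows "(\<Sum>p\<in>F. gg p * Wm a p) = 1 + (-1) ^ Suc r"
proof -
  have fa: "finite a" using assms by (auto simp: subsets_eq_def intro: finite_subset)
  have ca: "card a = Suc r" using assms by (simp add: subsets_eq_def)
  have ane: "a \<noteq> {}" using ca by auto
  have R: "(\<Sum>p\<in>Pow a - {{}}. (-1::real) ^ card p) = (-1) ^ card a + (\<Sum>p\<in>Pow a - {{}, a}. (-1::real) ^ card p)"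
  proof -
    have "a \<in> Pow a - {{}}" using ane by auto
    moreover have "Pow a - {{}} - {a} = Pow a - {{}, a}" by auto
    moreover have "finite (Pow a - {{}})" using fa by simp
    ultimately show ?thesis using sum.remove by metis
  qed
  have R2: "(\<Sum>p\<in>Pow a - {{}, a}. (-1::real) ^ card p) = -1 - (-1) ^ card a"
    using alt_pow_ne[OF fa ane] R by linarith
  have "(\<Sum>p\<in>F. gg p * Wm a p) = (\<Sum>p\<in>F. if p \<subseteq> a then - ((-1::real) ^ card p) else 0)"
    by (rule sum.cong) (auto simp: Wm_def gg_def)
  also have "\<dots> = (\<Sum>p\<in>{p\<in>F. p \<subseteq> a}. - ((-1::real) ^ card p))"
    using finF by (simp add: sum.inter_filter)
  also have "\<dots> = - (\<Sum>p\<in>Pow a - {{}, a}. (-1::real) ^ card p)"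
    by (simp add: filt_a[OF assms] sum_negf)
  finally show ?thesis using R2 ca by simp
qed

lemma Mab:
  assumes "a \<in> subsets_eq n (Suc r)" "b \<in> subsets_eq n (Suc r)"
  shows "Mentry a b = 1 + (if a = b then 1 else 0) + (\<Sum>p\<in>F. Wm a p * Wm b p)"
proof (cases "a = b")
  case True
  have fa: "finite a" using assms by (auto simp: subsets_eq_def intro: finite_subset)
  have ca: "card a = Suc r" using assms by (simp add: subsets_eq_def)
  have "(\<Sum>p\<in>F. Wm a p * Wm b p) = (\<Sum>p\<in>F. Wm a p)" using True by (intro sum.cong) (auto simp: Wm_def)
  also have "\<dots> = real (card (Pow a - {{}, a}))" by (simp add: sumW_ind filt_a[OF assms(1)])
  also have "card (Pow a - {{}, a}) = 2 ^ Suc r - 2"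
  proof -
    have "{{}, a} \<subseteq> Pow a" by auto
    moreover have "a \<noteq> {}" using ca by auto
    then have "card {{}, a} = 2" by simp
    ultimately show ?thesis using fa ca by (simp add: card_Diff_subset card_Pow)
  qed
  finally have "(\<Sum>p\<in>F. Wm a p * Wm b p) = 2 ^ Suc r - 2"
    by (simp add: of_nat_diff)
  then show ?thesis using True ca by (simp add: Mentry_def)
next
  case False
  have fa: "finite a" using assms by (auto simp: subsets_eq_def intro: finite_subset)
  have ca: "card a = Suc r" "card b = Suc r" using assms by (auto simp: subsets_eq_def)
  have fb: "finite b" using assms by (auto simp: subsets_eq_def intro: finite_subset)
  have "a \<inter> b \<noteq> a"
  proof
    assume "a \<inter> b = a"
    then have "a \<subseteq> b" by auto
    then have "a = b" using card_subset_eq[OF fb] ca by auto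
    then show False using False by simp
  qed
  then have "card (a \<inter> b) < card a" using fa by (meson Int_lower1 psubsetI psubset_card_mono)
  then have c: "card (a \<inter> b) \<le> r" using ca by simp
  have s: "a \<inter> b \<subseteq> {1..n}" using assms by (auto simp: subsets_eq_def)
  have "(\<Sum>p\<in>F. Wm a p * Wm b p) = 2 ^ card (a \<inter> b) - 1"
    unfolding WmInt by (rule countsub[OF s c])
  then show ?thesis using False by (simp add: Mentry_def)
qed

end

context LL begin

lemma schur_val:
  assumes a: "a \<in> subsets_eq n (Suc r)" and b: "b \<in> subsets_eq n (Suc r)"
  shows "schur_on F Mentry a b = (if a = b then 1 else 0) + 1 / alpha n r"
proof -
  have aA: "a \<subseteq> {1..n}" and bA: "b \<subseteq> {1..n}" using a b by (auto simp: subsets_eq_def)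
  define G where "G = (1::real) + (-1) ^ Suc r"
  define N where "N = real (card F)"
  define Y where "Y = (\<Sum>p\<in>F. Wm a p * Wm b p)"
  have Ga: "(\<Sum>p\<in>F. gg p * Wm a p) = G" using Gval[OF a] G_def by simp
  have Gb: "(\<Sum>p\<in>F. gg p * Wm b p) = G" using Gval[OF b] G_def by simp
  have GG: "G * G = 2 * G" unfolding G_def by (simp add: algebra_simps flip: power_add) 
  define K where "K = (N + G) / al"
  have "(\<Sum>c\<in>F. \<Sum>d\<in>F. Mentry a c * inverse_on F Mentry c d * Mentry d b)
      = (\<Sum>c\<in>F. mv (Wm a) c * (\<Sum>d\<in>F. Minv c d * mv (Wm b) d))"
    by (intro sum.cong refl) (simp add: sum_distrib_left inverse_eq Mentry_mv[OF aA] Mentry_mv[OF bA] mult.assoc)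
  also have "\<dots> = (\<Sum>c\<in>F. mv (Wm a) c * ((\<Sum>q\<in>F. Wi q c * (gg q + Wm b q)) - hh c * K))"
    by (simp add: Usum Gb K_def N_def mult.assoc)
  also have "\<dots> = (\<Sum>q\<in>F. (gg q + Wm a q) * (gg q + Wm b q)) - K * (N + G)"
    by (simp add: Vsum Ga N_def)
  also have "(\<Sum>q\<in>F. (gg q + Wm a q) * (gg q + Wm b q)) = N + G + G + Y"
  proof -
    have "(\<Sum>q\<in>F. (gg q + Wm a q) * (gg q + Wm b q)) = (\<Sum>q\<in>F. 1 + gg q * Wm b q + gg q * Wm a q + Wm a q * Wm b q)"
      by (intro sum.cong refl) (simp add: algebra_simps gg_sq)
    then show ?thesis by (simp add: sum.distrib Ga Gb Y_def N_def)
  qed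
  finally have S: "(\<Sum>c\<in>F. \<Sum>d\<in>F. Mentry a c * inverse_on F Mentry c d * Mentry d b) = N + G + G + Y - K * (N + G)" .
  have M: "Mentry a b = 1 + (if a = b then 1 else 0) + Y" using Mab[OF a b] Y_def by simp
  have alN: "al = N + 1" by (simp add: al_def N_def)
  have Npos: "N + 1 > 0" by (simp add: N_def add_pos_nonneg)
  have "schur_on F Mentry a b = 1 + (if a = b then 1 else 0) + Y - (N + G + G + Y - (N + G) * (N + G) / (N + 1))"
    unfolding schur_on_def S M K_def alN by simp
  also have "\<dots> = (if a = b then 1 else 0) + 1 / (N + 1)"
  proof -
    have "(N + G) * (N + G) = (N + 1) * (N - 1 + 2 * G) + 1"
      using GG by (simp add: algebra_simps)
    then have "(N + G) * (N + G) / (N + 1) = (N - 1 + 2 * G) + 1 / (N + 1)"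
      using Npos by (simp add: field_simps)
    then show ?thesis by simp
  qed
  finally show ?thesis using cardF_alpha alN by simp
qed

end

theorem lemma7:
  fixes n t :: nat
  assumes "1 \<le> t" and "t \<le> n"
  shows "(2 \<le> t \<longrightarrow> invertible_on (subsets_upto n (t - 1)) Mentry) \<and>
         (\<forall>a\<in>subsets_eq n t. \<forall>b\<in>subsets_eq n t.
            schur_on (subsets_upto n (t - 1)) Mentry a b
              = (if a = b then 1 else 0) + 1 / alpha n (t - 1))"
proof -
  interpret LL n "t - 1" .
  have t: "t = Suc (t - 1)" using assms by simp
  have "invertible_on (subsets_upto n (t - 1)) Mentry"
    unfolding invertible_on_def using inv by blast
  moreover have "\<forall>a\<in>subsets_eq n t. \<forall>b\<in>subsets_eq n t.
            schur_on (subsets_upto n (t - 1)) Mentry a b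
              = (if a = b then 1 else 0) + 1 / alpha n (t - 1)"
    using schur_val t by metis
  ultimately show ?thesis by blast
qed

end
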